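(* Let $0 \leq a \leq b$. For any $t>0$ and $\lambda \in [0,+\infty)$, \[ |f_t(\lambda) - \tilde{\mathbf{1}}_{[a,b]}(\lambda)| \leq \begin{cases} s(t|\lambda - a|) & \text{if } \lambda \in [0,a)\cup\{b\},\\ s(t|\lambda-a|) + s(t|\lambda-b|) & \text{if } \lambda\in(a,b),\\ s(t|\lambda-b|) & \text{if } \lambda\in\{a\}\cup(b,+\infty), \end{cases} \] where $s:(0,+\infty)\to\mathbb{R}$ is $s(\rho) = \frac{e^{-\rho^2}}{2\sqrt\pi\,\rho}$.
   Context: For $0\le a\le b$ and $t>0$, $f_t(\lambda) = \frac{t}{\sqrt\pi}\int_a^b\exp(-t^2(\lambda-\mu)^2)\,d\mu$. The function $\tilde{\mathbf{1}}_{[a,b]}$ equals $1$ on $(a,b)$, $\frac12$ at $x=a$ and at $x=b$, and $0$ elsewhere. (When $a=b$, the cases are read with the conventions as printed.) *)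

theory Defs
  imports "HOL-Analysis.Analysis"
begin

definition f_t :: "real \<Rightarrow> real \<Rightarrow> real \<Rightarrow> real \<Rightarrow> real" where
  "f_t a b t lam = t / sqrt pi * integral {a..b} (\<lambda>\<mu>. exp (- (t\<^sup>2 * (lam - \<mu>)\<^sup>2)))"

definition ind_tilde :: "real \<Rightarrow> real \<Rightarrow> real \<Rightarrow> real" where
  "ind_tilde a b x = (if a < x \<and> x < b then 1 else if x = a \<or> x = b then 1/2 else 0)"

text \<open>s is only meaningful for rho > 0.\<close>
definition s_fun :: "real \<Rightarrow> real" where
  "s_fun \<rho> = exp (- (\<rho>\<^sup>2)) / (2 * sqrt pi * \<rho>)"

end

theory Submission imports Defs "HOL-Probability.Probability" "HOL-Real_Asymp.Real_Asymp" begin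

lemma gauss_set_int: "set_integrable lborel {0..} (\<lambda>x::real. exp (- x\<^sup>2))"
  using gaussian_moment_0 unfolding set_integrable_def
  by (rule integrable.intros)

lemma gauss_half: "((\<lambda>x::real. exp (- x\<^sup>2)) has_integral sqrt pi / 2) {0..}"
proof -
  have "((\<lambda>x. indicator {0..} x *\<^sub>R exp (- x\<^sup>2)) has_integral sqrt pi / 2) (UNIV::real set)"
  proof -
    have i: "integrable lborel (\<lambda>x::real. indicator {0..} x *\<^sub>R exp (- x\<^sup>2))"
      using gaussian_moment_0 by (rule integrable.intros)
    have e: "integral\<^sup>L lborel (\<lambda>x::real. indicator {0..} x *\<^sub>R exp (- x\<^sup>2)) = sqrt pi / 2"
      using gaussian_moment_0 by (rule has_bochner_integral_integral_eq)
    show ?thesis using has_integral_integral_lborel[OF i] unfolding e .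
  qed
  moreover have "(\<lambda>x::real. indicator {0..} x *\<^sub>R exp (- x\<^sup>2)) = (\<lambda>x. if x \<in> {0..} then exp (- x\<^sup>2) else 0)"
    by (auto simp: indicator_def)
  ultimately show ?thesis
    by (subst has_integral_restrict_UNIV[symmetric]) simp
qed

lemma gauss_int_on: "(0::real) \<le> r \<Longrightarrow> (\<lambda>x::real. exp (- x\<^sup>2)) integrable_on {r..}"
  by (rule set_borel_integral_eq_integral(1)[OF set_integrable_subset[OF gauss_set_int]]) auto

lemma h_int:
  assumes r: "(r::real) > 0"
  shows "((\<lambda>u. u / r * exp (- u\<^sup>2)) has_integral exp (- r\<^sup>2) / (2 * r)) {r..}"
proof (rule has_integral_to_inf)
  fix y :: real
  show "(\<lambda>u. u / r * exp (- u\<^sup>2)) integrable_on {r..y}"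
    by (rule integrable_continuous_interval) (intro continuous_intros, use r in auto)
next
  fix y :: real assume "r \<le> y"
  then show "0 \<le> y / r * exp (- y\<^sup>2)" using r by simp
next
  have d: "((\<lambda>u. -exp (- u\<^sup>2) / (2*r)) has_real_derivative (x / r * exp (- x\<^sup>2))) (at x)" for x
  proof -
    have "((\<lambda>u. -exp (- u\<^sup>2) / (2*r)) has_real_derivative (- (exp (- x\<^sup>2) * (- (2 * x))) / (2*r))) (at x)"
      using r by (intro derivative_eq_intros) (auto simp: power2_eq_square)
    moreover have "- (exp (- x\<^sup>2) * (- (2 * x))) / (2*r) = x / r * exp (- x\<^sup>2)"
      using r by (simp add: field_simps)
    ultimately show ?thesis by (simp add: mult_ac)
  qed
  have "((\<lambda>u. u / r * exp (- u\<^sup>2)) has_integral (-exp (- y\<^sup>2) / (2*r) - (-exp (- r\<^sup>2) / (2*r)))) {r..y}"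
    if "y \<ge> r" for y
  proof (rule fundamental_theorem_of_calculus[OF that])
    fix x assume "x \<in> {r..y}"
    show "((\<lambda>u. -exp (- u\<^sup>2) / (2*r)) has_vector_derivative (x / r * exp (- x\<^sup>2))) (at x within {r..y})"
      using d[of x] by (simp add: has_real_derivative_iff_has_vector_derivative[symmetric] has_field_derivative_at_within)
  qed
  note ftc = this
  have ev: "\<forall>\<^sub>F y in at_top. integral {r..y} (\<lambda>u. u / r * exp (- u\<^sup>2)) = -exp (- y\<^sup>2) / (2*r) - (-exp (- r\<^sup>2) / (2*r))"
  proof -
    have "\<forall>y\<ge>r. integral {r..y} (\<lambda>u. u / r * exp (- u\<^sup>2)) = -exp (- y\<^sup>2) / (2*r) - (-exp (- r\<^sup>2) / (2*r))"
      using ftc integral_unique by blast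
    then show ?thesis unfolding eventually_at_top_linorder by blast
  qed
  have lim: "((\<lambda>y::real. -exp (- y\<^sup>2) / (2*r) - (-exp (- r\<^sup>2) / (2*r))) \<longlongrightarrow> exp (- r\<^sup>2) / (2 * r)) at_top"
    using r by real_asymp
  show "((\<lambda>y. integral {r..y} (\<lambda>u. u / r * exp (- u\<^sup>2))) \<longlongrightarrow> exp (- r\<^sup>2) / (2 * r)) at_top"
    by (subst tendsto_cong[OF ev]) (rule lim)
qed

lemma tail_bound:
  assumes r: "(r::real) > 0"
  shows "integral {r..} (\<lambda>x::real. exp (- x\<^sup>2)) \<le> exp (- r\<^sup>2) / (2 * r)"
proof -
  have "integral {r..} (\<lambda>x::real. exp (- x\<^sup>2)) \<le> integral {r..} (\<lambda>u. u / r * exp (- u\<^sup>2))"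
  proof (rule integral_le)
    show "(\<lambda>x::real. exp (- x\<^sup>2)) integrable_on {r..}" using r by (intro gauss_int_on) auto
    show "(\<lambda>u. u / r * exp (- u\<^sup>2)) integrable_on {r..}" using h_int[OF r] by blast
    fix x assume "x \<in> {r..}"
    then have "1 \<le> x / r" using r by auto
    then show "exp (- x\<^sup>2) \<le> x / r * exp (- x\<^sup>2)"
      using mult_right_mono[of 1 "x/r" "exp (- x\<^sup>2)"] by simp
  qed
  also have "\<dots> = exp (- r\<^sup>2) / (2 * r)" using h_int[OF r] by (rule integral_unique)
  finally show ?thesis .
qed

lemma tail_nonneg: "(0::real) \<le> r \<Longrightarrow> integral {r..} (\<lambda>x::real. exp (- x\<^sup>2)) \<ge> 0"
  by (rule integral_nonneg) (auto intro: gauss_int_on)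


definition T :: "real \<Rightarrow> real" where "T r = integral {r..} (\<lambda>x::real. exp (- x\<^sup>2))"
definition F :: "real \<Rightarrow> real" where
  "F x = (if 0 \<le> x then sqrt pi / 2 - T x else T (-x) - sqrt pi / 2)"

lemma T0: "T 0 = sqrt pi / 2"
  unfolding T_def using gauss_half by (rule integral_unique)

lemma split_T:
  assumes "0 \<le> p" "p \<le> q"
  shows "integral {p..q} (\<lambda>x::real. exp (- x\<^sup>2)) = T p - T q"
proof -
  let ?g = "\<lambda>x::real. exp (- x\<^sup>2)"
  have "(?g has_integral (integral {p..q} ?g + T q)) ({p..q} \<union> {q..})"
    unfolding T_def
  proof (rule has_integral_Un)
    show "(?g has_integral integral {p..q} ?g) {p..q}"
      by (intro integrable_integral integrable_continuous_interval continuous_intros)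
    show "(?g has_integral integral {q..} ?g) {q..}"
      using assms by (intro integrable_integral gauss_int_on) simp
    have "{p..q} \<inter> {q..} = {q}" using assms by auto
    then show "negligible ({p..q} \<inter> {q..})" by simp
  qed
  moreover have "{p..q} \<union> {q..} = {p..}" using assms by auto
  ultimately have "(?g has_integral (integral {p..q} ?g + T q)) {p..}" by simp
  then have "integral {p..} ?g = integral {p..q} ?g + T q" by (rule integral_unique)
  then show ?thesis unfolding T_def by simp
qed

lemma main_int:
  assumes "u1 \<le> u2"
  shows "integral {u1..u2} (\<lambda>x::real. exp (- x\<^sup>2)) = F u2 - F u1"
proof -
  let ?g = "\<lambda>x::real. exp (- x\<^sup>2)"
  consider "0 \<le> u1" | "u2 \<le> 0" | "u1 < 0" "0 < u2" by linarith
  then show ?thesis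
  proof cases
    case 1
    then show ?thesis using split_T[OF 1 assms] assms by (simp add: F_def)
  next
    case 2
    have "(?g has_integral integral {-u2..-u1} ?g) {-u2..-u1}"
      by (intro integrable_integral integrable_continuous_interval continuous_intros)
    then have "((\<lambda>x. ?g (-x)) has_integral integral {-u2..-u1} ?g) {u1..u2}"
      using has_integral_reflect_real[where f="?g" and a="-u2" and b="-u1"] by simp
    then have "integral {u1..u2} ?g = integral {-u2..-u1} ?g"
      by (simp add: integral_unique)
    also have "\<dots> = T (-u2) - T (-u1)" using 2 assms by (intro split_T) auto
    finally show ?thesis using 2 assms T0 by (auto simp: F_def)
  next
    case 3
    have "integral {u1..0} ?g + integral {0..u2} ?g = integral {u1..u2} ?g"
      using 3 by (intro Henstock_Kurzweil_Integration.integral_combine integrable_continuous_interval continuous_intros; simp)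
    moreover have "integral {0..u2} ?g = F u2 - F 0"
      using 3 split_T[of 0 u2] by (simp add: F_def T0)
    moreover have "integral {u1..0} ?g = F 0 - F u1"
    proof -
      have "(?g has_integral integral {0..-u1} ?g) {0..-u1}"
        by (intro integrable_integral integrable_continuous_interval continuous_intros)
      then have "((\<lambda>x. ?g (-x)) has_integral integral {0..-u1} ?g) {u1..0}"
        using has_integral_reflect_real[where f="?g" and a="0" and b="-u1"] by simp
      then have "integral {u1..0} ?g = integral {0..-u1} ?g"
        by (simp add: integral_unique)
      also have "\<dots> = T 0 - T (-u1)" using 3 by (intro split_T) auto
      finally show ?thesis using 3 T0 by (auto simp: F_def)
    qed
    ultimately show ?thesis by simp
  qed
qed

lemma f_t_F:
  assumes "t > 0" "a \<le> b"
  shows "f_t a b t lam = (F (t * (b - lam)) - F (t * (a - lam))) / sqrt pi"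
proof -
  let ?g = "\<lambda>x::real. exp (- x\<^sup>2)"
  let ?J = "integral {t * (a - lam)..t * (b - lam)} ?g"
  have "(?g has_integral ?J) {t * (a - lam)..t * (b - lam)}"
    by (intro integrable_integral integrable_continuous_interval continuous_intros)
  then have "(?g has_integral ?J) (cbox (t * (a - lam)) (t * (b - lam)))"
    by (simp only: cbox_interval)
  from has_integral_affinity'[OF this assms(1), of "- (t * lam)"]
  have 1: "((\<lambda>x. ?g (t *\<^sub>R x + - (t * lam))) has_integral (?J /\<^sub>R t ^ DIM(real)))
     (cbox ((t * (a - lam) - - (t * lam)) /\<^sub>R t) ((t * (b - lam) - - (t * lam)) /\<^sub>R t))" .
  have e1: "(t * (a - lam) - - (t * lam)) /\<^sub>R t = a" "(t * (b - lam) - - (t * lam)) /\<^sub>R t = b"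
    using assms(1) by (simp_all add: algebra_simps)
  have e2: "(\<lambda>x. ?g (t *\<^sub>R x + - (t * lam))) = (\<lambda>\<mu>. exp (- (t\<^sup>2 * (lam - \<mu>)\<^sup>2)))"
    by (rule ext) (simp add: power2_eq_square algebra_simps)
  have e3: "?J /\<^sub>R t ^ DIM(real) = ?J / t" by (simp add: divide_inverse mult.commute)
  have "((\<lambda>\<mu>. exp (- (t\<^sup>2 * (lam - \<mu>)\<^sup>2))) has_integral ?J / t) {a..b}"
    using 1 unfolding e1 e2 e3 cbox_interval .
  then have "integral {a..b} (\<lambda>\<mu>. exp (- (t\<^sup>2 * (lam - \<mu>)\<^sup>2))) = ?J / t"
    by (rule integral_unique)
  moreover have "?J = F (t * (b - lam)) - F (t * (a - lam))"
    using assms by (intro main_int) (simp add: mult_left_mono)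
  ultimately show ?thesis unfolding f_t_def by simp
qed

lemma T_s: "(r::real) > 0 \<Longrightarrow> T r / sqrt pi \<le> s_fun r"
  using tail_bound[of r] unfolding T_def s_fun_def
  by (simp add: divide_right_mono field_simps)

lemma T_nn: "(r::real) \<ge> 0 \<Longrightarrow> T r \<ge> 0"
  unfolding T_def by (rule tail_nonneg)

lemma f_t_nn: "a \<le> b \<Longrightarrow> t > 0 \<Longrightarrow> f_t a b t lam \<ge> 0"
  unfolding f_t_def
  by (intro mult_nonneg_nonneg integral_nonneg integrable_continuous_interval continuous_intros) auto

theorem lemma3p3:
  fixes a b t lam :: real
  assumes "0 \<le> a" and "a \<le> b" and "t > 0" and "0 \<le> lam"
    and "\<not> (a = b \<and> lam = a)"
  shows "(lam \<in> {0..<a} \<union> {b} \<longrightarrow>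
            \<bar>f_t a b t lam - ind_tilde a b lam\<bar> \<le> s_fun (t * \<bar>lam - a\<bar>))
       \<and> (lam \<in> {a<..<b} \<longrightarrow>
            \<bar>f_t a b t lam - ind_tilde a b lam\<bar> \<le> s_fun (t * \<bar>lam - a\<bar>) + s_fun (t * \<bar>lam - b\<bar>))
       \<and> (lam \<in> {a} \<union> {b<..} \<longrightarrow>
            \<bar>f_t a b t lam - ind_tilde a b lam\<bar> \<le> s_fun (t * \<bar>lam - b\<bar>))"
proof -
  define u1 where "u1 = t * (a - lam)"
  define u2 where "u2 = t * (b - lam)"
  have sp: "sqrt pi > 0" by simp
  have f: "f_t a b t lam = (F u2 - F u1) / sqrt pi"
    unfolding u1_def u2_def using assms by (intro f_t_F) auto
  have fnn: "f_t a b t lam \<ge> 0" using assms f_t_nn by auto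
  have c1: "\<bar>f_t a b t lam - ind_tilde a b lam\<bar> \<le> s_fun (t * \<bar>lam - a\<bar>)"
    if "lam < a" 
  proof -
    have p: "u1 > 0" "u2 > 0" "t * \<bar>lam - a\<bar> = u1" using that assms by (auto simp: u1_def u2_def abs_if algebra_simps mult_less_cancel_left_pos)
    have "ind_tilde a b lam = 0" using that assms by (auto simp: ind_tilde_def)
    moreover have "f_t a b t lam = T u1 / sqrt pi - T u2 / sqrt pi"
      using f p by (simp add: F_def diff_divide_distrib)
    moreover have "T u2 / sqrt pi \<ge> 0" using T_nn p by simp
    moreover have "T u1 / sqrt pi \<le> s_fun u1" using T_s p by simp
    ultimately show ?thesis unfolding p(3) abs_le_iff using fnn by linarith
  qed
  have c2: "\<bar>f_t a b t lam - ind_tilde a b lam\<bar> \<le> s_fun (t * \<bar>lam - a\<bar>)"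
    if "lam = b" "a < b"
  proof -
    have p: "u1 < 0" "u2 = 0" "t * \<bar>lam - a\<bar> = - u1" using that assms by (auto simp: u1_def u2_def abs_if algebra_simps mult_less_cancel_left_pos)
    have "ind_tilde a b lam = 1/2" using that assms by (auto simp: ind_tilde_def)
    moreover have "f_t a b t lam = 1/2 - T (-u1) / sqrt pi"
    proof -
      have "F u2 = 0" "F u1 = T (-u1) - sqrt pi / 2" using p by (simp_all add: F_def T0)
      then show ?thesis using f sp by (simp add: diff_divide_distrib)
    qed
    moreover have "T (-u1) / sqrt pi \<ge> 0" using T_nn p by simp
    moreover have "T (-u1) / sqrt pi \<le> s_fun (-u1)" using T_s p by simp
    ultimately show ?thesis unfolding p(3-) abs_le_iff by linarith
  qed
  have c3: "\<bar>f_t a b t lam - ind_tilde a b lam\<bar> \<le> s_fun (t * \<bar>lam - a\<bar>) + s_fun (t * \<bar>lam - b\<bar>)"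
    if "a < lam" "lam < b"
  proof -
    have p: "u1 < 0" "u2 > 0" "t * \<bar>lam - a\<bar> = - u1" "t * \<bar>lam - b\<bar> = u2"
      using that assms by (auto simp: u1_def u2_def abs_if algebra_simps mult_less_cancel_left_pos)
    have "ind_tilde a b lam = 1" using that assms by (auto simp: ind_tilde_def)
    moreover have "f_t a b t lam = 1 - T (-u1) / sqrt pi - T u2 / sqrt pi"
    proof -
      have "F u2 = sqrt pi / 2 - T u2" "F u1 = T (-u1) - sqrt pi / 2" using p by (simp_all add: F_def)
      then have "F u2 - F u1 = sqrt pi - T (-u1) - T u2" by simp
      then show ?thesis using f sp by (simp add: diff_divide_distrib)
    qed
    moreover have "T (-u1) / sqrt pi \<ge> 0" "T u2 / sqrt pi \<ge> 0" using T_nn p by simp_all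
    moreover have "T (-u1) / sqrt pi \<le> s_fun (-u1)" "T u2 / sqrt pi \<le> s_fun u2" using T_s p by simp_all
    ultimately show ?thesis unfolding p(3-) abs_le_iff by linarith
  qed
  have c4: "\<bar>f_t a b t lam - ind_tilde a b lam\<bar> \<le> s_fun (t * \<bar>lam - b\<bar>)"
    if "lam = a" "a < b"
  proof -
    have p: "u1 = 0" "u2 > 0" "t * \<bar>lam - b\<bar> = u2" using that assms by (auto simp: u1_def u2_def abs_if algebra_simps mult_less_cancel_left_pos)
    have "ind_tilde a b lam = 1/2" using that assms by (auto simp: ind_tilde_def)
    moreover have "f_t a b t lam = 1/2 - T u2 / sqrt pi"
    proof -
      have "F u2 = sqrt pi / 2 - T u2" "F u1 = 0" using p by (simp_all add: F_def T0)
      then show ?thesis using f sp by (simp add: diff_divide_distrib)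
    qed
    moreover have "T u2 / sqrt pi \<ge> 0" using T_nn p by simp
    moreover have "T u2 / sqrt pi \<le> s_fun u2" using T_s p by simp
    ultimately show ?thesis unfolding p(3-) abs_le_iff by linarith
  qed
  have c5: "\<bar>f_t a b t lam - ind_tilde a b lam\<bar> \<le> s_fun (t * \<bar>lam - b\<bar>)"
    if "b < lam"
  proof -
    have p: "u1 < 0" "u2 < 0" "t * \<bar>lam - b\<bar> = - u2" using that assms by (auto simp: u1_def u2_def abs_if algebra_simps mult_less_cancel_left_pos)
    have "ind_tilde a b lam = 0" using that assms by (auto simp: ind_tilde_def)
    moreover have "f_t a b t lam = T (-u2) / sqrt pi - T (-u1) / sqrt pi"
      using f p by (simp add: F_def diff_divide_distrib)
    moreover have "T (-u1) / sqrt pi \<ge> 0" using T_nn p by simp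
    moreover have "T (-u2) / sqrt pi \<le> s_fun (-u2)" using T_s p by simp
    ultimately show ?thesis unfolding p(3) abs_le_iff using fnn by linarith
  qed
  show ?thesis
  proof (intro conjI impI)
    assume "lam \<in> {0..<a} \<union> {b}"
    then show "\<bar>f_t a b t lam - ind_tilde a b lam\<bar> \<le> s_fun (t * \<bar>lam - a\<bar>)"
      using c1 c2 assms by auto
  next
    assume "lam \<in> {a<..<b}"
    then show "\<bar>f_t a b t lam - ind_tilde a b lam\<bar> \<le> s_fun (t * \<bar>lam - a\<bar>) + s_fun (t * \<bar>lam - b\<bar>)"
      using c3 by auto
  next
    assume "lam \<in> {a} \<union> {b<..}"
    then show "\<bar>f_t a b t lam - ind_tilde a b lam\<bar> \<le> s_fun (t * \<bar>lam - b\<bar>)"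
      using c4 c5 assms by auto
  qed
qed

end
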